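(* Suppose the matrix $A=D_\mu(I-\gamma P)$ has at least one non-real eigenvalue. Then there exists a differentiable function approximator $V:\mathbb{R}^d\to\mathbb{R}^n$ such that the TD dynamics $\dot\theta=-\nabla V(\theta)^T A\,(V(\theta)-V^* )$ diverge: for any initial parameters $\theta_0$, $\Vert V(\theta(t))-V^*\Vert\to\infty$ as $t\to\infty$. Moreover, such a $V$ can be chosen so that $\nabla V(\theta)$ has rank $n-1$ for all $\theta$.
   Context: A Markov reward process has finite state space with $n$ states, transition matrix $P$ defining an irreducible, aperiodic Markov chain with stationary distribution $\mu$, a finite reward function $r(s,s')$, and discount factor $\gamma\in[0,1)$. Let $R(s)=\mathbb{E}_{s'\sim P(\cdot|s)}[r(s,s')]$ and $V^*\in\mathbb{R}^n$ the unique solution of $V^*=R+\gamma PV^*$. $D_\mu=\mathrm{diag}(\mu)$. $\nabla V(\theta)$ is the $n\times d$ Jacobian of $V$. *)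

theory Defs
  imports "HOL-Analysis.Analysis"
begin

fun mpow :: "real^'n^'n \<Rightarrow> nat \<Rightarrow> real^'n^'n" where
  "mpow P 0 = mat 1"
| "mpow P (Suc k) = P ** mpow P k"

definition stochastic :: "real^'n^'n \<Rightarrow> bool" where
  "stochastic P \<longleftrightarrow> (\<forall>i j. P$i$j \<ge> 0) \<and> (\<forall>i. (\<Sum>j\<in>UNIV. P$i$j) = 1)"

definition irreducible_chain :: "real^'n^'n \<Rightarrow> bool" where
  "irreducible_chain P \<longleftrightarrow> (\<forall>i j. \<exists>k. mpow P k $ i $ j > 0)"

definition period :: "real^'n^'n \<Rightarrow> 'n \<Rightarrow> nat" where
  "period P i = Gcd {k. k \<ge> 1 \<and> mpow P k $ i $ i > 0}"

definition aperiodic_chain :: "real^'n^'n \<Rightarrow> bool" where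
  "aperiodic_chain P \<longleftrightarrow> (\<forall>i. period P i = 1)"

definition stationary_distribution :: "real^'n^'n \<Rightarrow> real^'n \<Rightarrow> bool" where
  "stationary_distribution P \<mu> \<longleftrightarrow>
     (\<forall>i. \<mu>$i \<ge> 0) \<and> (\<Sum>i\<in>UNIV. \<mu>$i) = 1 \<and> \<mu> v* P = \<mu>"

definition diag_mat :: "real^'n \<Rightarrow> real^'n^'n" where
  "diag_mat v = (\<chi> i j. if i = j then v$i else 0)"

definition cmat :: "real^'n^'m \<Rightarrow> complex^'n^'m" where
  "cmat A = (\<chi> i j. complex_of_real (A$i$j))"

definition is_eigenvalue :: "real^'n^'n \<Rightarrow> complex \<Rightarrow> bool" where
  "is_eigenvalue A c \<longleftrightarrow> (\<exists>v::complex^'n. v \<noteq> 0 \<and> cmat A *v v = c *s v)"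

definition exp_reward :: "real^'n^'n \<Rightarrow> ('n \<Rightarrow> 'n \<Rightarrow> real) \<Rightarrow> real^'n" where
  "exp_reward P r = (\<chi> s. \<Sum>s'\<in>UNIV. P$s$s' * r s s')"

definition td_field :: "real^'n^'n \<Rightarrow> real^'n \<Rightarrow> (real^'d \<Rightarrow> real^'n)
     \<Rightarrow> (real^'d \<Rightarrow> real^'d \<Rightarrow> real^'n) \<Rightarrow> real^'d \<Rightarrow> real^'d" where
  "td_field A Vs V V' \<theta> = - (transpose (matrix (V' \<theta>)) *v (A *v (V \<theta> - Vs)))"

end

theory Submission
  imports Defs
begin




primrec pic :: "real^'n^'n \<Rightarrow> (real \<Rightarrow> real^'n) \<Rightarrow> real^'n \<Rightarrow> nat \<Rightarrow> real \<Rightarrow> real^'n" where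
  "pic K f y0 0 = (\<lambda>t. y0)"
| "pic K f y0 (Suc m) = (\<lambda>t. y0 + integral {0..t} (\<lambda>\<tau>. K *v pic K f y0 m \<tau> + f \<tau>))"

lemma cont_mv[continuous_intros]:
  fixes K :: "real^'n^'m" and g :: "'a::euclidean_space \<Rightarrow> real^'n"
  assumes "continuous_on S g" shows "continuous_on S (\<lambda>x. K *v g x)"
  using linear_continuous_on_compose[OF assms matrix_vector_mul_linear] .

lemma pic_cont:
  assumes f: "continuous_on UNIV f"
  shows "continuous_on {0..T} (pic K f y0 m)"
proof (induction m arbitrary: T)
  case 0 then show ?case by simp
next
  case (Suc m)
  have c: "continuous_on {0..T} (\<lambda>\<tau>. K *v pic K f y0 m \<tau> + f \<tau>)"
    by (intro continuous_intros Suc continuous_on_subset[OF f]) auto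
  have "continuous_on {0..T} (\<lambda>t. integral {0..t} (\<lambda>\<tau>. K *v pic K f y0 m \<tau> + f \<tau>))"
    by (rule indefinite_integral_continuous_1) (rule integrable_continuous_real[OF c])
  then show ?case by (simp add: continuous_intros)
qed

lemma int_pow:
  assumes "0 \<le> t"
  shows "((\<lambda>\<tau>::real. c * \<tau>^m) has_integral c * t^Suc m / Suc m) {0..t}"
proof -
  have "((\<lambda>\<tau>::real. c * \<tau>^m) has_integral (c * t^Suc m / Suc m - c * 0^Suc m / Suc m)) {0..t}"
    apply (rule fundamental_theorem_of_calculus[OF assms])
    apply (auto intro!: derivative_eq_intros simp: has_real_derivative_iff_has_vector_derivative[symmetric])
    apply (simp add: field_simps del: of_nat_Suc)
    apply (cases m, auto)
    done
  then show ?thesis by simp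
qed

lemma pic_bound:
  fixes K :: "real^'n^'n"
  assumes f: "continuous_on UNIV f" and L: "\<And>x. norm (K *v x) \<le> L * norm x" and "L > 0"
    and B: "\<And>t. t \<in> {0..T} \<Longrightarrow> norm (pic K f y0 1 t - pic K f y0 0 t) \<le> B"
  shows "t \<in> {0..T} \<Longrightarrow> norm (pic K f y0 (Suc m) t - pic K f y0 m t) \<le> B * (L*t)^m / fact m"
proof (induction m arbitrary: t)
  case 0 then show ?case using B by simp
next
  case (Suc m)
  let ?p = "pic K f y0"
  have ct: "continuous_on {0..t} (?p k)" for k by (rule pic_cont[OF f])
  have i1: "(\<lambda>\<tau>. K *v ?p k \<tau> + f \<tau>) integrable_on {0..t}" for k
    by (intro integrable_continuous_real continuous_intros ct continuous_on_subset[OF f]) auto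
  have "?p (Suc (Suc m)) t - ?p (Suc m) t =
        integral {0..t} (\<lambda>\<tau>. K *v ?p (Suc m) \<tau> + f \<tau>) - integral {0..t} (\<lambda>\<tau>. K *v ?p m \<tau> + f \<tau>)"
    by simp
  also have "\<dots> = integral {0..t} (\<lambda>\<tau>. K *v (?p (Suc m) \<tau> - ?p m \<tau>))"
    by (subst integral_diff[OF i1 i1, symmetric]) (simp add: matrix_vector_mult_diff_distrib)
  finally have eq: "?p (Suc (Suc m)) t - ?p (Suc m) t = integral {0..t} (\<lambda>\<tau>. K *v (?p (Suc m) \<tau> - ?p m \<tau>))" .
  have hi: "((\<lambda>\<tau>. (L * B * L^m / fact m) * \<tau>^m) has_integral (L * B * L^m / fact m) * t^Suc m / Suc m) {0..t}"
    using Suc.prems by (intro int_pow) auto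
  have "norm (integral {0..t} (\<lambda>\<tau>. K *v (?p (Suc m) \<tau> - ?p m \<tau>))) \<le> integral {0..t} (\<lambda>\<tau>. (L * B * L^m / fact m) * \<tau>^m)"
  proof (rule integral_norm_bound_integral)
    show "(\<lambda>\<tau>. K *v (?p (Suc m) \<tau> - ?p m \<tau>)) integrable_on {0..t}"
      by (intro integrable_continuous_real continuous_intros ct)
    show "(\<lambda>\<tau>. (L * B * L^m / fact m) * \<tau>^m) integrable_on {0..t}"
      using hi by blast
    fix x assume x: "x \<in> {0..t}"
    have "norm (K *v (?p (Suc m) x - ?p m x)) \<le> L * norm (?p (Suc m) x - ?p m x)" by (rule L)
    also have "\<dots> \<le> L * (B * (L*x)^m / fact m)"
      using Suc.IH[of x] x Suc.prems \<open>L > 0\<close> by (intro mult_left_mono) auto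
    also have "\<dots> = (L * B * L^m / fact m) * x^m" by (simp add: power_mult_distrib)
    finally show "norm (K *v (?p (Suc m) x - ?p m x)) \<le> (L * B * L^m / fact m) * x^m" .
  qed
  also have "\<dots> = (L * B * L^m / fact m) * t^Suc m / Suc m" using hi by blast
  also have "\<dots> = B * (L*t)^Suc m / fact (Suc m)"
    by (simp add: power_mult_distrib field_simps del: of_nat_Suc)
  finally show ?case using eq by simp
qed

lemma within_switch: "at (t::real) within {0..t+1} = at t within {0..}"
  by (rule at_within_nhd[of t "{..<t+1}"]) auto

lemma lin_ode_exists:
  fixes K :: "real^'n^'n" and f :: "real \<Rightarrow> real^'n"
  assumes f: "continuous_on UNIV f"
  shows "\<exists>y. y 0 = yi \<and> (\<forall>t\<ge>0. (y has_vector_derivative (K *v y t + f t)) (at t within {0..}))"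
proof -
  obtain L where L: "L > 0" "\<And>x. norm (K *v x) \<le> L * norm x"
    using linear_bounded_pos[OF matrix_vector_mul_linear[of K]] by blast
  let ?p = "pic K f yi"
  define d where "d i t = ?p (Suc i) t - ?p i t" for i t
  define Y where "Y t = yi + (\<Sum>i. d i t)" for t
  have tele: "?p m t = yi + (\<Sum>i<m. d i t)" for m t
    by (induction m) (simp_all add: d_def)
  have ul: "uniform_limit {0..T} ?p Y sequentially" if "T \<ge> 0" for T
  proof -
    have "compact ((\<lambda>t. ?p 1 t - ?p 0 t) ` {0..T})"
      by (intro compact_continuous_image continuous_intros pic_cont[OF f]) auto
    then obtain B where B: "\<And>t. t \<in> {0..T} \<Longrightarrow> norm (?p 1 t - ?p 0 t) \<le> B"
      using compact_imp_bounded bounded_iff by (metis (no_types, lifting) image_eqI)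
    have bd: "norm (d i t) \<le> B * (L*T)^i / fact i" if "t \<in> {0..T}" for i t
    proof -
      have "norm (d i t) \<le> B * (L*t)^i / fact i"
        unfolding d_def by (rule pic_bound[OF f L(2) L(1) B that])
      also have "\<dots> \<le> B * (L*T)^i / fact i"
      proof -
        have B0: "B \<ge> 0" using B[of 0] \<open>T \<ge> 0\<close> norm_ge_zero order_trans by fastforce
        have "(L*t)^i \<le> (L*T)^i" using that L(1) by (intro power_mono mult_left_mono) auto
        then show ?thesis using B0 by (intro divide_right_mono mult_left_mono) auto
      qed
      finally show ?thesis .
    qed
    have sm: "summable (\<lambda>i. B * (L*T)^i / fact i)"
      using summable_mult[OF summable_exp[of "L*T"], of B] by (simp add: field_simps)
    have "uniform_limit {0..T} (\<lambda>m t. \<Sum>i<m. d i t) (\<lambda>t. \<Sum>i. d i t) sequentially"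
      by (rule Weierstrass_m_test[OF bd sm])
    then have "uniform_limit {0..T} (\<lambda>m t. yi + (\<Sum>i<m. d i t)) (\<lambda>t. yi + (\<Sum>i. d i t)) sequentially"
      by (intro uniform_limit_intros)
    then show ?thesis unfolding Y_def tele[symmetric] .
  qed
  have Yc: "continuous_on {0..T} Y" if "T \<ge> 0" for T
    by (rule uniform_limit_theorem[OF _ ul[OF that]]) (auto intro!: always_eventually pic_cont[OF f])
  have Yint: "Y t = yi + integral {0..t} (\<lambda>\<tau>. K *v Y \<tau> + f \<tau>)" if "t \<ge> 0" for t
  proof -
    have u2: "uniform_limit {0..t} (\<lambda>m \<tau>. K *v ?p m \<tau> + f \<tau>) (\<lambda>\<tau>. K *v Y \<tau> + f \<tau>) sequentially"
      by (intro uniform_limit_intros bounded_linear.uniform_limit[OF _ ul[OF that]])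
         (auto intro: matrix_vector_mul_bounded_linear)
    obtain I J where IJ: "\<And>m. ((\<lambda>\<tau>. K *v ?p m \<tau> + f \<tau>) has_integral I m) {0..t}"
       "((\<lambda>\<tau>. K *v Y \<tau> + f \<tau>) has_integral J) {0..t}" "I \<longlonglongrightarrow> J"
      by (rule uniform_limit_integral[OF u2]) (auto intro!: continuous_intros pic_cont[OF f] continuous_on_subset[OF f])
    have "(\<lambda>m. ?p (Suc m) t) \<longlonglongrightarrow> yi + J"
    proof -
      have "integral {0..t} (\<lambda>\<tau>. K *v ?p m \<tau> + f \<tau>) = I m" for m using IJ(1) by (rule integral_unique)
      then show ?thesis using IJ(3) by (simp add: tendsto_add)
    qed
    moreover have "(\<lambda>m. ?p (Suc m) t) \<longlonglongrightarrow> Y t"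
    proof -
      have "(\<lambda>m. ?p m t) \<longlonglongrightarrow> Y t" using tendsto_uniform_limitI[OF ul[OF that], of t] that by auto
      from LIMSEQ_Suc[OF this] show ?thesis by simp
    qed
    ultimately show ?thesis using IJ(2) LIMSEQ_unique integral_unique by metis
  qed
  have "(Y has_vector_derivative (K *v Y t + f t)) (at t within {0..})" if "t \<ge> 0" for t
  proof -
    have c: "continuous_on {0..t+1} (\<lambda>\<tau>. K *v Y \<tau> + f \<tau>)"
      using that by (intro continuous_intros Yc continuous_on_subset[OF f]) auto
    have "((\<lambda>u. yi + integral {0..u} (\<lambda>\<tau>. K *v Y \<tau> + f \<tau>)) has_vector_derivative (K *v Y t + f t)) (at t within {0..t+1})"
      using integral_has_vector_derivative[OF c, of t] that
      by (auto intro!: derivative_eq_intros)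
    then have "(Y has_vector_derivative (K *v Y t + f t)) (at t within {0..t+1})"
      by (rule has_vector_derivative_transform_within[where d=1]) (use that Yint in auto)
    then show ?thesis using within_switch by simp
  qed
  moreover have "Y 0 = yi" using Yint[of 0] by simp
  ultimately show ?thesis by blast
qed


lemma deriv_one:
  fixes h :: "real \<Rightarrow> real"
  assumes "\<And>t. t \<ge> 0 \<Longrightarrow> (h has_vector_derivative 1) (at t within {0..})" and "t \<ge> 0"
  shows "h t = h 0 + t"
proof -
  have "\<exists>c. \<forall>x\<in>{0..}. h x - x = c"
  proof (rule has_derivative_zero_constant)
    fix x :: real assume "x \<in> {0..}"
    then have "((\<lambda>t. h t - t) has_vector_derivative (1 - 1)) (at x within {0..})"
      using assms(1) by (intro derivative_intros) auto
    then show "((\<lambda>t. h t - t) has_derivative (\<lambda>h. 0)) (at x within {0..})"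
      by (simp add: has_vector_derivative_def)
  qed auto
  then obtain c where c: "\<forall>x\<in>{0..}. h x - x = c" by blast
  have "h t - t = c" using c assms(2) by auto
  moreover have "h 0 - 0 = c" using c by (metis atLeast_iff order_refl)
  ultimately show ?thesis by simp
qed

definition E :: "('n \<Rightarrow> 'd) \<Rightarrow> real^'d \<Rightarrow> real^'n" where
  "E \<iota> \<theta> = (\<chi> j. \<theta> $ \<iota> j)"
definition Et :: "('n \<Rightarrow> 'd) \<Rightarrow> real^'n \<Rightarrow> real^'d" where
  "Et \<iota> y = (\<chi> i. if i \<in> range \<iota> then y $ (inv \<iota> i) else 0)"

lemma E_Et: "inj \<iota> \<Longrightarrow> E \<iota> (Et \<iota> y) = y"
  unfolding E_def Et_def by (simp add: vec_eq_iff)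

lemma linear_E: "linear (E \<iota>)"
  by (rule linearI) (simp_all add: E_def vec_eq_iff)

lemma linear_Et: "linear (Et \<iota>)"
  by (rule linearI) (simp_all add: Et_def vec_eq_iff)

lemma bl_E: "bounded_linear (E \<iota>)" using linear_E linear_conv_bounded_linear by blast
lemma bl_Et: "bounded_linear (Et \<iota>)" using linear_Et linear_conv_bounded_linear by blast

lemma inner_E_axis: "inj \<iota> \<Longrightarrow> inner z (E \<iota> (axis i 1)) = Et \<iota> z $ i"
proof -
  assume inj: "inj \<iota>"
  have "inner z (E \<iota> (axis i 1)) = (\<Sum>j\<in>UNIV. z $ j * (if \<iota> j = i then 1 else 0))"
    unfolding E_def inner_vec_def by (simp add: axis_def)
  also have "\<dots> = (\<Sum>j\<in>{j. \<iota> j = i}. z $ j)"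
  proof -
    have "(\<Sum>j\<in>UNIV. z $ j * (if \<iota> j = i then 1 else 0)) = (\<Sum>j\<in>UNIV. if \<iota> j = i then z $ j else 0)"
      by (rule sum.cong) auto
    also have "\<dots> = (\<Sum>j\<in>{j. \<iota> j = i}. z $ j)"
      by (subst sum.If_cases) auto
    finally show ?thesis .
  qed
  also have "\<dots> = Et \<iota> z $ i"
  proof (cases "i \<in> range \<iota>")
    case True
    then obtain j0 where j0: "i = \<iota> j0" by auto
    then have "{j. \<iota> j = i} = {j0}" using inj by (auto simp: inj_def)
    then show ?thesis using True j0 inj by (simp add: Et_def)
  next
    case False
    then have "{j. \<iota> j = i} = {}" by auto
    then show ?thesis using False by (simp add: Et_def)
  qed
  finally show ?thesis .
qed

locale constr =
  fixes A :: "real^'n^'n" and u v :: "real^'n" and a b :: real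
  assumes pd: "\<And>x. x \<noteq> 0 \<Longrightarrow> 0 < inner x (A *v x)"
    and eu: "transpose A *v u = a *\<^sub>R u - b *\<^sub>R v"
    and ev: "transpose A *v v = b *\<^sub>R u + a *\<^sub>R v"
    and bnz: "b \<noteq> 0" and nz: "u \<noteq> 0 \<or> v \<noteq> 0"
begin

lemma tA: "inner x (A *v y) = inner (transpose A *v x) y"
  by (simp add: dot_lmul_matrix)

definition "q x = inner x (A *v x)"

lemma q_scale: "q (c *\<^sub>R x) = c * c * q x" unfolding q_def by (simp add: algebra_simps)

lemma q_pos: "x \<noteq> 0 \<Longrightarrow> q x > 0" using pd q_def by simp

lemma omega: "inner u (A *v v) - inner v (A *v u) = - b * (inner u u + inner v v)"
  unfolding tA eu ev by (simp add: algebra_simps inner_commute)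

lemma omega_nz: "inner u (A *v v) - inner v (A *v u) \<noteq> 0"
proof -
  have "inner u u + inner v v > 0" using nz
    by (metis add_nonneg_pos add_pos_nonneg inner_gt_zero_iff inner_ge_zero)
  then show ?thesis unfolding omega using bnz by simp
qed

lemma u_nz: "u \<noteq> 0" using omega_nz by auto

definition "k = (inner u (A *v v) + inner v (A *v u)) / (2 * q u)"
definition "g = v - k *\<^sub>R u"

lemma g_omega: "inner u (A *v g) - inner g (A *v u) = inner u (A *v v) - inner v (A *v u)"
  unfolding g_def by (simp add: algebra_simps inner_diff_left inner_diff_right)

lemma g_sym: "inner u (A *v g) + inner g (A *v u) = 0"
proof -
  have "q u > 0" using q_pos u_nz by simp
  then show ?thesis unfolding g_def k_def
    by (simp add: algebra_simps inner_diff_left inner_diff_right q_def[symmetric] inner_commute[of v u]) (simp add: field_simps)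
qed

lemma g_nz: "g \<noteq> 0"
proof
  assume "g = 0"
  then have "inner u (A *v g) - inner g (A *v u) = 0" by simp
  then show False using g_omega omega_nz by simp
qed

definition "f1 = u /\<^sub>R sqrt (q u)"
definition "f2 = g /\<^sub>R sqrt (q g)"
definition "kap = inner f1 (A *v f2)"

lemma qf1: "q f1 = 1"
proof -
  have "q u > 0" using q_pos u_nz by simp
  then show ?thesis unfolding f1_def q_scale by (simp add: field_simps)
qed

lemma qf2: "q f2 = 1"
proof -
  have "q g > 0" using q_pos g_nz by simp
  then show ?thesis unfolding f2_def q_scale by (simp add: field_simps)
qed

lemma f21: "inner f2 (A *v f1) = - kap"
proof -
  have "inner f2 (A *v f1) + inner f1 (A *v f2) = (inner g (A *v u) + inner u (A *v g)) / (sqrt (q u) * sqrt (q g))"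
    unfolding f1_def f2_def by (simp add: algebra_simps add_divide_distrib divide_inverse)
  then show ?thesis using g_sym unfolding kap_def by (simp add: add.commute)
qed

lemma kap_nz: "kap \<noteq> 0"
proof -
  have "q u > 0" "q g > 0" using q_pos g_nz u_nz by auto
  have "inner f1 (A *v f2) - inner f2 (A *v f1) = (inner u (A *v g) - inner g (A *v u)) / (sqrt (q u) * sqrt (q g))"
    unfolding f1_def f2_def by (simp add: algebra_simps diff_divide_distrib divide_inverse)
  then have "2 * kap = (inner u (A *v g) - inner g (A *v u)) / (sqrt (q u) * sqrt (q g))"
    using f21 unfolding kap_def by simp
  moreover have "(inner u (A *v g) - inner g (A *v u)) / (sqrt (q u) * sqrt (q g)) \<noteq> 0"
    using g_omega omega_nz \<open>q u > 0\<close> \<open>q g > 0\<close> by simp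
  ultimately show ?thesis by auto
qed

lemma omega_par: "v = c *\<^sub>R u \<Longrightarrow> inner u (A *v v) - inner v (A *v u) = 0"
  by (simp add: algebra_simps)

definition "u1 = u /\<^sub>R norm u"
definition "vp = v - inner v u1 *\<^sub>R u1"
definition "u2 = vp /\<^sub>R norm vp"
definition "PW y = y - inner u1 y *\<^sub>R u1 - inner u2 y *\<^sub>R u2"
definition "inU x \<longleftrightarrow> (\<exists>\<alpha> \<beta>. x = \<alpha> *\<^sub>R u + \<beta> *\<^sub>R v)"

lemma u1u1: "inner u1 u1 = 1"
  using u_nz unfolding u1_def by (simp add: dot_square_norm power2_eq_square)

lemma u_u1: "u = norm u *\<^sub>R u1" using u_nz unfolding u1_def by simp

lemma vp_nz: "vp \<noteq> 0"
proof
  assume "vp = 0"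
  then have "v = (inner v u1 / norm u) *\<^sub>R u" unfolding vp_def u1_def by (simp add: divide_inverse)
  from omega_par[OF this] omega_nz show False by simp
qed

lemma u2u2: "inner u2 u2 = 1"
  using vp_nz unfolding u2_def by (simp add: dot_square_norm power2_eq_square)

lemma u1u2: "inner u1 u2 = 0"
proof -
  have "inner u1 vp = 0" unfolding vp_def using u1u1 by (simp add: inner_diff_right inner_commute)
  then show ?thesis unfolding u2_def by simp
qed

lemma v_dec: "v = inner v u1 *\<^sub>R u1 + norm vp *\<^sub>R u2"
  using vp_nz unfolding u2_def vp_def by simp

lemma PW_u1: "inner u1 (PW y) = 0"
  unfolding PW_def using u1u1 u1u2 by (simp add: inner_diff_right)

lemma PW_u2: "inner u2 (PW y) = 0"
  unfolding PW_def using u2u2 u1u2 by (simp add: inner_diff_right inner_commute)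

lemma orth_uv: "inner u1 z = 0 \<Longrightarrow> inner u2 z = 0 \<Longrightarrow> inner u z = 0 \<and> inner v z = 0"
  by (subst u_u1, subst v_dec) (simp add: inner_add_left)

lemma inv_W: "inner u1 z = 0 \<Longrightarrow> inner u2 z = 0 \<Longrightarrow> inner u (A *v z) = 0 \<and> inner v (A *v z) = 0"
  using orth_uv[of z] unfolding tA eu ev by (simp add: inner_diff_left inner_add_left)

lemma inU_add: "inU x \<Longrightarrow> inU y \<Longrightarrow> inU (x + y)"
  unfolding inU_def by (auto simp: algebra_simps) (metis scaleR_add_left add.assoc add.commute add.left_commute)

lemma inU_scale: "inU x \<Longrightarrow> inU (c *\<^sub>R x)"
  unfolding inU_def by (auto simp: algebra_simps) (metis scaleR_scaleR)

lemma inU_u: "inU u" unfolding inU_def by (rule exI[of _ 1], rule exI[of _ 0]) simp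
lemma inU_v: "inU v" unfolding inU_def by (rule exI[of _ 0], rule exI[of _ 1]) simp

lemma inU_diff: "inU x \<Longrightarrow> inU y \<Longrightarrow> inU (x - y)"
  using inU_add[of x "(-1) *\<^sub>R y"] inU_scale[of y "-1"] by simp

lemma inU_u1: "inU u1" unfolding u1_def by (intro inU_scale inU_u)
lemma inU_u2: "inU u2" unfolding u2_def vp_def by (intro inU_scale inU_diff inU_v inU_u1)

lemma inU_orth: "inU x \<Longrightarrow> inner x (PW y) = 0"
  unfolding inU_def using orth_uv[OF PW_u1 PW_u2] by (auto simp: inner_add_left)

lemma inU_AW: "inU x \<Longrightarrow> inner x (A *v PW y) = 0"
  unfolding inU_def using inv_W[OF PW_u1 PW_u2] by (auto simp: inner_add_left)

lemma PW_add: "PW (x + y) = PW x + PW y" unfolding PW_def by (simp add: algebra_simps inner_add_right)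
lemma PW_scale: "PW (c *\<^sub>R x) = c *\<^sub>R PW x" unfolding PW_def by (simp add: algebra_simps)
lemma PW_diff: "PW (x - y) = PW x - PW y" unfolding PW_def by (simp add: algebra_simps inner_diff_right)
lemma linear_PW: "linear PW" by (rule linearI) (auto simp: PW_add PW_scale)

lemma PW_u: "PW u = 0"
  using u1u2 u1u1 by (subst u_u1) (simp add: PW_scale PW_def inner_commute)

lemma PW_v: "PW v = 0"
proof -
  have "inner u2 v = norm vp" using u2u2 u1u2 by (subst v_dec) (simp add: inner_add_right inner_commute)
  moreover have "inner u1 v = inner v u1" by (simp add: inner_commute)
  ultimately show ?thesis unfolding PW_def using v_dec by (simp add: algebra_simps)
qed

lemma inU_PW: "inU x \<Longrightarrow> PW x = 0"
  unfolding inU_def by (auto simp: PW_add PW_scale PW_u PW_v)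

lemma inU_dec: "inU x \<Longrightarrow> x = inner u1 x *\<^sub>R u1 + inner u2 x *\<^sub>R u2"
  using inU_PW[of x] unfolding PW_def by (simp add: algebra_simps)

lemma PW_PW: "PW (PW y) = PW y"
  using PW_u1 PW_u2 unfolding PW_def[of "PW y"] by simp

lemma PW_sym: "inner x (PW y) = inner (PW x) y"
  unfolding PW_def by (simp add: inner_diff_left inner_diff_right inner_commute algebra_simps)

lemma inU_f1: "inU f1" unfolding f1_def by (intro inU_scale inU_u)
lemma inU_f2: "inU f2" unfolding f2_def g_def by (intro inU_scale inU_diff inU_v inU_u)

lemma bil: "inner (\<alpha> *\<^sub>R f1 + \<beta> *\<^sub>R f2) (A *v (\<gamma> *\<^sub>R f1 + \<delta> *\<^sub>R f2)) = \<alpha>*\<gamma> + \<alpha>*\<delta>*kap - \<beta>*\<gamma>*kap + \<beta>*\<delta>"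
  using qf1 qf2 f21 unfolding q_def kap_def by (simp add: algebra_simps inner_add_left inner_add_right)

definition "phi s = (s - exp (- (2 * s))/2) / kap"
definition "phi' s = (1 + exp (- (2 * s))) / kap"
definition "G s = exp s *\<^sub>R (cos (phi s) *\<^sub>R f1 + sin (phi s) *\<^sub>R f2)"
definition "G' s = exp s *\<^sub>R ((cos (phi s) - phi' s * sin (phi s)) *\<^sub>R f1 + (sin (phi s) + phi' s * cos (phi s)) *\<^sub>R f2)"

lemma phi_deriv: "(phi has_real_derivative phi' s) (at s)"
  unfolding phi_def phi'_def using kap_nz
  by (auto intro!: derivative_eq_intros simp: field_simps)

lemma G_deriv: "(G has_vector_derivative G' s) (at s)"
proof -
  have "((\<lambda>s. exp s *\<^sub>R (cos (phi s) *\<^sub>R f1 + sin (phi s) *\<^sub>R f2)) has_vector_derivative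
     (exp s *\<^sub>R (cos (phi s) *\<^sub>R f1 + sin (phi s) *\<^sub>R f2) + exp s *\<^sub>R ((- sin (phi s) * phi' s) *\<^sub>R f1 + (cos (phi s) * phi' s) *\<^sub>R f2))) (at s)"
    by (auto intro!: derivative_eq_intros phi_deriv simp: has_real_derivative_iff_has_vector_derivative[symmetric])
  then show ?thesis unfolding G_def[abs_def] G'_def by (simp add: algebra_simps)
qed

lemma inU_G: "inU (G s)" unfolding G_def by (intro inU_scale inU_add inU_f1 inU_f2)
lemma inU_G': "inU (G' s)" unfolding G'_def by (intro inU_scale inU_add inU_f1 inU_f2)

lemma GAG: "inner (G s) (A *v G s) = exp s * exp s"
proof -
  have "inner (G s) (A *v G s) = exp s * exp s * ((cos (phi s))^2 + (sin (phi s))^2)"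
    unfolding G_def by (simp only: inner_scaleR_left inner_scaleR_right matrix_vector_mult_scaleR bil) (simp add: power2_eq_square algebra_simps)
  then show ?thesis by simp
qed

lemma G'AG: "inner (G' s) (A *v G s) = -1"
proof -
  have sc: "cos (phi s) * cos (phi s) = 1 - sin (phi s) * sin (phi s)"
    using cos_squared_eq[of "phi s"] by (simp add: power2_eq_square)
  have "inner (G' s) (A *v G s) = exp s * exp s * (1 - kap * phi' s)"
    unfolding G_def G'_def by (simp only: inner_scaleR_left inner_scaleR_right matrix_vector_mult_scaleR bil) (simp add: sc algebra_simps)
  also have "\<dots> = exp s * exp s * (- exp (- (2 * s)))" using kap_nz unfolding phi'_def by (simp add: field_simps)
  also have "\<dots> = - exp (s + s + - (2 * s))" by (simp only: exp_add)
  finally show ?thesis by simp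
qed

lemma G'_nz: "G' s \<noteq> 0" using G'AG[of s] by auto

definition "Vf Vs \<iota> \<theta> = Vs + G (inner u1 (E \<iota> \<theta>)) + PW (E \<iota> \<theta>)"
definition "Vd \<iota> \<theta> h = inner u1 (E \<iota> h) *\<^sub>R G' (inner u1 (E \<iota> \<theta>)) + PW (E \<iota> h)"

lemma bl_PW: "bounded_linear PW" using linear_PW linear_conv_bounded_linear by blast

lemma linear_Vd: "linear (Vd \<iota> \<theta>)"
  unfolding Vd_def
  by (rule linearI) (simp_all add: linear_add[OF linear_E] linear_cmul[OF linear_E] PW_add PW_scale
      inner_add_right algebra_simps)

lemma V_deriv: "(Vf Vs \<iota> has_derivative Vd \<iota> \<theta>) (at \<theta>)"
proof -
  have d1: "((\<lambda>\<theta>. inner u1 (E \<iota> \<theta>)) has_derivative (\<lambda>h. inner u1 (E \<iota> h))) (at \<theta>)"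
    by (intro bounded_linear.has_derivative[OF bounded_linear_compose[OF bounded_linear_inner_right bl_E]] has_derivative_ident)
  have d2: "(G has_derivative (\<lambda>x. x *\<^sub>R G' (inner u1 (E \<iota> \<theta>)))) (at (inner u1 (E \<iota> \<theta>)))"
    using G_deriv unfolding has_vector_derivative_def .
  have d3: "((\<lambda>\<theta>. G (inner u1 (E \<iota> \<theta>))) has_derivative (\<lambda>h. inner u1 (E \<iota> h) *\<^sub>R G' (inner u1 (E \<iota> \<theta>)))) (at \<theta>)"
    using has_derivative_compose[OF d1 d2] .
  have d4: "((\<lambda>\<theta>. PW (E \<iota> \<theta>)) has_derivative (\<lambda>h. PW (E \<iota> h))) (at \<theta>)"
    by (intro bounded_linear.has_derivative[OF bounded_linear_compose[OF bl_PW bl_E]] has_derivative_ident)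
  have "((\<lambda>\<theta>. Vs + G (inner u1 (E \<iota> \<theta>)) + PW (E \<iota> \<theta>)) has_derivative
     (\<lambda>h. 0 + inner u1 (E \<iota> h) *\<^sub>R G' (inner u1 (E \<iota> \<theta>)) + PW (E \<iota> h))) (at \<theta>)"
    by (intro has_derivative_add has_derivative_const d3 d4)
  then show ?thesis unfolding Vf_def[abs_def] Vd_def by simp
qed

definition "nu s = inner u2 (G' s) *\<^sub>R u1 - inner u1 (G' s) *\<^sub>R u2"

lemma nu_nz: "nu s \<noteq> 0"
proof
  assume "nu s = 0"
  then have "inner u1 (nu s) = 0" "inner u2 (nu s) = 0" by auto
  then have "inner u2 (G' s) = 0" "inner u1 (G' s) = 0"
    unfolding nu_def using u1u1 u2u2 u1u2 by (auto simp: inner_diff_right inner_commute)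
  then have "G' s = 0" using inU_dec[OF inU_G'[of s]] by simp
  then show False using G'_nz by simp
qed

lemma range_Vd: "inj \<iota> \<Longrightarrow> range (Vd \<iota> \<theta>) = {z. inner (nu (inner u1 (E \<iota> \<theta>))) z = 0}"
proof -
  assume inj: "inj \<iota>"
  define s where "s = inner u1 (E \<iota> \<theta>)"
  define g1 where "g1 = inner u1 (G' s)"
  define g2 where "g2 = inner u2 (G' s)"
  have Gd: "G' s = g1 *\<^sub>R u1 + g2 *\<^sub>R u2" unfolding g1_def g2_def by (rule inU_dec[OF inU_G'])
  have nuG: "inner (nu s) (G' s) = 0"
    unfolding nu_def g1_def g2_def by (simp add: inner_diff_left)
  have nuPW: "inner (nu s) (PW y) = 0" for y
    unfolding nu_def by (simp add: inner_diff_left PW_u1 PW_u2)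
  show ?thesis
  proof (intro equalityI subsetI)
    fix z assume "z \<in> range (Vd \<iota> \<theta>)"
    then obtain h where "z = Vd \<iota> \<theta> h" by auto
    then show "z \<in> {z. inner (nu (inner u1 (E \<iota> \<theta>))) z = 0}"
      unfolding Vd_def s_def[symmetric] by (simp add: inner_add_right nuG nuPW)
  next
    fix z assume "z \<in> {z. inner (nu (inner u1 (E \<iota> \<theta>))) z = 0}"
    then have z: "inner (nu s) z = 0" unfolding s_def by simp
    define a1 where "a1 = inner u1 z"
    define a2 where "a2 = inner u2 z"
    have rel: "g2 * a1 = g1 * a2" using z unfolding nu_def a1_def a2_def g1_def g2_def
      by (simp add: inner_diff_left)
    have gg: "g1 * g1 + g2 * g2 > 0"
    proof -
      have "g1 \<noteq> 0 \<or> g2 \<noteq> 0" using Gd G'_nz[of s] by auto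
      then show ?thesis by (metis add_pos_nonneg add_nonneg_pos zero_le_square not_real_square_gt_zero)
    qed
    define lam where "lam = (a1 * g1 + a2 * g2) / (g1 * g1 + g2 * g2)"
    have l1: "lam * g1 = a1"
    proof -
      have e: "(a1 * g1 + a2 * g2) * g1 = a1 * (g1 * g1 + g2 * g2)" using rel by (simp add: algebra_simps)
      have "lam * g1 = ((a1 * g1 + a2 * g2) * g1) / (g1 * g1 + g2 * g2)" unfolding lam_def by simp
      also have "\<dots> = a1" unfolding e by (rule nonzero_mult_div_cancel_right) (use gg in linarith)
      finally show ?thesis .
    qed
    have l2: "lam * g2 = a2"
    proof -
      have e: "(a1 * g1 + a2 * g2) * g2 = a2 * (g1 * g1 + g2 * g2)" using rel by (simp add: algebra_simps)
      have "lam * g2 = ((a1 * g1 + a2 * g2) * g2) / (g1 * g1 + g2 * g2)" unfolding lam_def by simp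
      also have "\<dots> = a2" unfolding e by (rule nonzero_mult_div_cancel_right) (use gg in linarith)
      finally show ?thesis .
    qed
    define y where "y = PW z + lam *\<^sub>R u1"
    have Ey: "E \<iota> (Et \<iota> y) = y" using E_Et[OF inj] .
    have "Vd \<iota> \<theta> (Et \<iota> y) = lam *\<^sub>R G' s + PW z"
      unfolding Vd_def s_def[symmetric] Ey unfolding y_def
      using u1u1 PW_u1 inU_PW[OF inU_u1] by (simp add: inner_add_right PW_add PW_scale PW_PW)
    also have "\<dots> = z"
      unfolding Gd PW_def a1_def[symmetric] a2_def[symmetric] using l1 l2
      by (simp add: algebra_simps)
    finally show "z \<in> range (Vd \<iota> \<theta>)" by (metis rangeI)
  qed
qed

lemma rank_Vd: "inj \<iota> \<Longrightarrow> rank (matrix (Vd \<iota> \<theta>)) = CARD('n) - 1"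
proof -
  assume inj: "inj \<iota>"
  have "rank (matrix (Vd \<iota> \<theta>)) = dim (range (Vd \<iota> \<theta>))"
    unfolding rank_dim_range matrix_vector_mul(2)[OF linear_Vd] ..
  also have "\<dots> = CARD('n) - 1"
    unfolding range_Vd[OF inj] by (subst dim_hyperplane[OF nu_nz]) simp
  finally show ?thesis .
qed

lemma w_eq: "Vf Vs \<iota> \<theta> - Vs = G (inner u1 (E \<iota> \<theta>)) + PW (E \<iota> \<theta>)"
  unfolding Vf_def by simp

lemma G'_Aw: "inner (G' s) (A *v (G s + PW y)) = -1"
  using G'AG inU_AW[OF inU_G'] by (simp add: matrix_vector_right_distrib inner_add_right)

lemma field_eq:
  assumes inj: "inj \<iota>"
  shows "td_field A Vs (Vf Vs \<iota>) (Vd \<iota>) \<theta> = Et \<iota> (u1 - PW (A *v (Vf Vs \<iota> \<theta> - Vs)))"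
proof -
  define a where "a = A *v (Vf Vs \<iota> \<theta> - Vs)"
  define s where "s = inner u1 (E \<iota> \<theta>)"
  have Ga: "inner (G' s) a = -1" unfolding a_def w_eq s_def[symmetric] by (rule G'_Aw)
  have "td_field A Vs (Vf Vs \<iota>) (Vd \<iota>) \<theta> $ i = Et \<iota> (u1 - PW a) $ i" for i
  proof -
    have "td_field A Vs (Vf Vs \<iota>) (Vd \<iota>) \<theta> $ i = - (\<Sum>k\<in>UNIV. Vd \<iota> \<theta> (axis i 1) $ k * a $ k)"
      unfolding td_field_def a_def[symmetric] transpose_matrix_vector
      by (simp add: vector_matrix_mult_def matrix_def mult.commute)
    also have "\<dots> = - inner (Vd \<iota> \<theta> (axis i 1)) a"
      by (simp add: inner_vec_def)
    also have "\<dots> = inner u1 (E \<iota> (axis i 1)) - inner (PW a) (E \<iota> (axis i 1))"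
      unfolding Vd_def s_def[symmetric] using Ga
      by (simp add: inner_add_left) (metis PW_sym inner_commute)
    also have "\<dots> = inner (u1 - PW a) (E \<iota> (axis i 1))" by (simp add: inner_diff_left)
    also have "\<dots> = Et \<iota> (u1 - PW a) $ i" by (rule inner_E_axis[OF inj])
    finally show ?thesis .
  qed
  then show ?thesis unfolding a_def by (simp add: vec_eq_iff)
qed

lemma cont_G: "continuous_on S G"
  using G_deriv by (meson continuous_at_imp_continuous_on has_vector_derivative_continuous)

lemma cont_PW[continuous_intros]: "continuous_on S h \<Longrightarrow> continuous_on S (\<lambda>x. PW (h x))"
  unfolding PW_def by (intro continuous_intros)

lemma exists_sol:
  assumes inj: "inj \<iota>"
  shows "\<exists>\<theta>. \<theta> 0 = \<theta>0 \<and> (\<forall>t\<ge>0. (\<theta> has_vector_derivative td_field A Vs (Vf Vs \<iota>) (Vd \<iota>) (\<theta> t)) (at t within {0..}))"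
proof -
  define y0 where "y0 = E \<iota> \<theta>0"
  define s0 where "s0 = inner u1 y0"
  define K where "K = matrix (\<lambda>y. - PW (A *v PW y))"
  have linK: "linear (\<lambda>y. - PW (A *v PW y))"
    by (intro linear_compose_neg linear_compose[OF linear_PW, unfolded o_def]
        linear_compose[OF _ linear_PW, unfolded o_def] matrix_vector_mul_linear)
  have Kv: "K *v y = - PW (A *v PW y)" for y
    unfolding K_def using matrix_vector_mul(2)[OF linK] by metis
  define f where "f t = u1 - PW (A *v G (s0 + t))" for t
  have cf: "continuous_on UNIV f" unfolding f_def
    by (intro continuous_intros cont_mv continuous_on_compose2[OF cont_G[of UNIV]]) auto
  obtain y where y0: "y 0 = y0" and yd: "\<And>t. t \<ge> 0 \<Longrightarrow> (y has_vector_derivative (K *v y t + f t)) (at t within {0..})"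
    using lin_ode_exists[OF cf, where K=K and yi=y0] by blast
  have sy: "inner u1 (y t) = s0 + t" if "t \<ge> 0" for t
  proof -
    have "inner u1 (y t) = inner u1 (y 0) + t"
    proof (rule deriv_one[OF _ that])
      fix t :: real assume "t \<ge> 0"
      have "((\<lambda>t. inner u1 (y t)) has_vector_derivative inner u1 (K *v y t + f t)) (at t within {0..})"
        by (rule bounded_linear.has_vector_derivative[OF bounded_linear_inner_right yd[OF \<open>t \<ge> 0\<close>]])
      moreover have "inner u1 (K *v y t + f t) = 1"
        unfolding Kv f_def using u1u1 by (simp add: inner_add_right inner_diff_right PW_u1)
      ultimately show "((\<lambda>t. inner u1 (y t)) has_vector_derivative 1) (at t within {0..})" by simp
    qed
    then show ?thesis using y0 s0_def by simp
  qed
  define \<theta> where "\<theta> t = (\<theta>0 - Et \<iota> y0) + Et \<iota> (y t)" for t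
  have E\<theta>: "E \<iota> (\<theta> t) = y t" for t
    unfolding \<theta>_def using E_Et[OF inj] by (simp add: linear_add[OF linear_E] linear_diff[OF linear_E] y0_def)
  have "\<theta> 0 = \<theta>0" unfolding \<theta>_def y0 by simp
  moreover have "(\<theta> has_vector_derivative td_field A Vs (Vf Vs \<iota>) (Vd \<iota>) (\<theta> t)) (at t within {0..})" if "t \<ge> 0" for t
  proof -
    have "(\<theta> has_vector_derivative (0 + Et \<iota> (K *v y t + f t))) (at t within {0..})"
      unfolding \<theta>_def[abs_def]
      by (intro derivative_intros bounded_linear.has_vector_derivative[OF bl_Et yd[OF that]])
    moreover have "Et \<iota> (K *v y t + f t) = td_field A Vs (Vf Vs \<iota>) (Vd \<iota>) (\<theta> t)"
      unfolding field_eq[OF inj] w_eq E\<theta> sy[OF that] Kv f_def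
      by (simp add: matrix_vector_right_distrib PW_add algebra_simps)
    ultimately show ?thesis by simp
  qed
  ultimately show ?thesis by blast
qed

lemma diverge:
  assumes inj: "inj \<iota>"
    and sol: "\<And>t. t \<ge> 0 \<Longrightarrow> (\<theta> has_vector_derivative td_field A Vs (Vf Vs \<iota>) (Vd \<iota>) (\<theta> t)) (at t within {0..})"
  shows "filterlim (\<lambda>t. norm (Vf Vs \<iota> (\<theta> t) - Vs)) at_top at_top"
proof -
  define s0 where "s0 = inner u1 (E \<iota> (\<theta> 0))"
  have st: "inner u1 (E \<iota> (\<theta> t)) = s0 + t" if "t \<ge> 0" for t
  proof -
    have "inner u1 (E \<iota> (\<theta> t)) = inner u1 (E \<iota> (\<theta> 0)) + t"
    proof (rule deriv_one[OF _ that])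
      fix t :: real assume t: "t \<ge> 0"
      have "((\<lambda>t. inner u1 (E \<iota> (\<theta> t))) has_vector_derivative inner u1 (E \<iota> (td_field A Vs (Vf Vs \<iota>) (Vd \<iota>) (\<theta> t)))) (at t within {0..})"
        by (rule bounded_linear.has_vector_derivative[OF bounded_linear_inner_right
              bounded_linear.has_vector_derivative[OF bl_E sol[OF t]]])
      moreover have "inner u1 (E \<iota> (td_field A Vs (Vf Vs \<iota>) (Vd \<iota>) (\<theta> t))) = 1"
        unfolding field_eq[OF inj] E_Et[OF inj] using u1u1 by (simp add: inner_diff_right PW_u1)
      ultimately show "((\<lambda>t. inner u1 (E \<iota> (\<theta> t))) has_vector_derivative 1) (at t within {0..})" by simp
    qed
    then show ?thesis unfolding s0_def .
  qed
  obtain L where L: "L > 0" "\<And>x. norm (A *v x) \<le> L * norm x"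
    using linear_bounded_pos[OF matrix_vector_mul_linear[of A]] by blast
  have Gb: "exp s / sqrt L \<le> norm (G s)" for s
  proof -
    have "exp s * exp s = inner (G s) (A *v G s)" by (rule GAG[symmetric])
    also have "\<dots> \<le> norm (G s) * norm (A *v G s)" by (rule norm_cauchy_schwarz)
    also have "\<dots> \<le> norm (G s) * (L * norm (G s))" by (intro mult_left_mono L(2)) auto
    finally have "(exp s)^2 \<le> L * (norm (G s))^2"
      by (simp add: power2_eq_square algebra_simps)
    also have "\<dots> = (sqrt L * norm (G s))^2" using L(1) by (simp add: power_mult_distrib)
    finally have "(exp s)^2 \<le> (sqrt L * norm (G s))^2" .
    then have "exp s \<le> sqrt L * norm (G s)"
      by (rule power2_le_imp_le) (use L(1) in simp)
    then show ?thesis using L(1) by (simp add: field_simps)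
  qed
  have orth: "norm x \<le> norm (x + y)" if "inner x y = 0" for x y :: "real^'n"
  proof -
    have "(norm x)^2 \<le> (norm (x + y))^2"
      using that by (simp add: power2_norm_eq_inner inner_add_left inner_add_right inner_commute)
    then show ?thesis by (rule power2_le_imp_le) simp
  qed
  have lb: "exp s0 / sqrt L * exp t \<le> norm (Vf Vs \<iota> (\<theta> t) - Vs)" if "t \<ge> 0" for t
  proof -
    have "exp s0 / sqrt L * exp t = exp (s0 + t) / sqrt L" by (simp add: exp_add)
    also have "\<dots> \<le> norm (G (s0 + t))" by (rule Gb)
    also have "\<dots> \<le> norm (Vf Vs \<iota> (\<theta> t) - Vs)"
      unfolding w_eq st[OF that] by (rule orth[OF inU_orth[OF inU_G]])
    finally show ?thesis .
  qed
  have "filterlim (\<lambda>t. exp s0 / sqrt L * exp t) at_top at_top"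
    by (rule filterlim_tendsto_pos_mult_at_top[OF tendsto_const _ exp_at_top]) (use L(1) in simp)
  then show ?thesis
    by (rule filterlim_at_top_mono) (use lb in \<open>auto simp: eventually_at_top_linorder\<close>)
qed

end



lemma mpow_nonneg: "stochastic P \<Longrightarrow> mpow P k $ i $ j \<ge> 0"
proof (induction k arbitrary: i j)
  case 0 then show ?case by (simp add: mat_def)
next
  case (Suc k)
  then show ?case unfolding stochastic_def
    by (auto simp: matrix_matrix_mult_def intro!: sum_nonneg)
qed

lemma mu_mpow: "\<mu> v* P = \<mu> \<Longrightarrow> \<mu> v* mpow P k = \<mu>"
  by (induction k) (simp_all add: vector_matrix_mul_assoc[symmetric])

lemma mu_pos:
  assumes st: "stochastic P" and irr: "irreducible_chain P" and sd: "stationary_distribution P \<mu>"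
  shows "\<mu> $ j > 0"
proof (rule ccontr)
  assume "\<not> \<mu> $ j > 0"
  then have mj: "\<mu> $ j = 0" using sd unfolding stationary_distribution_def by (meson le_less not_less)
  have "\<mu> $ i = 0" for i
  proof -
    obtain k where k: "mpow P k $ i $ j > 0" using irr unfolding irreducible_chain_def by blast
    have mu0: "\<mu> $ l \<ge> 0" for l using sd unfolding stationary_distribution_def by auto
    have "\<mu> v* mpow P k = \<mu>" using mu_mpow[of \<mu> P k] sd unfolding stationary_distribution_def by simp
    then have "\<mu> $ j = (\<mu> v* mpow P k) $ j" by simp
    also have "\<dots> = (\<Sum>l\<in>UNIV. mpow P k $ l $ j * \<mu> $ l)"
      by (simp add: vector_matrix_mult_def mult.commute)
    also have "\<dots> \<ge> mpow P k $ i $ j * \<mu> $ i"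
      by (rule member_le_sum) (simp_all add: mpow_nonneg[OF st] mu0)
    finally have "mpow P k $ i $ j * \<mu> $ i \<le> 0" using mj by simp
    moreover have "\<mu> $ i \<ge> 0" using sd unfolding stationary_distribution_def by auto
    ultimately show ?thesis using k by (simp add: mult_le_0_iff)
  qed
  then have "(\<Sum>i\<in>UNIV. \<mu> $ i) = 0" by simp
  then show False using sd unfolding stationary_distribution_def by simp
qed

lemma A_apply:
  "(diag_mat \<mu> ** (mat 1 - \<gamma> *\<^sub>R P)) *v x = (\<chi> i. \<mu> $ i * (x $ i - \<gamma> * (P *v x) $ i))"
proof -
  have "(diag_mat \<mu> ** (mat 1 - \<gamma> *\<^sub>R P)) *v x = diag_mat \<mu> *v (x - \<gamma> *\<^sub>R (P *v x))"
    by (simp add: matrix_vector_mul_assoc[symmetric] matrix_vector_mult_diff_rdistrib scaleR_matrix_vector_assoc)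
  also have "\<dots> = (\<chi> i. \<mu> $ i * (x $ i - \<gamma> * (P *v x) $ i))"
  proof -
    have "(\<Sum>j\<in>UNIV. (if i = j then \<mu> $ i else 0) * y $ j) = \<mu> $ i * y $ i" for i and y :: "real^'a"
    proof -
      have "(\<Sum>j\<in>UNIV. (if i = j then \<mu> $ i else 0) * y $ j) = (\<Sum>j\<in>UNIV. if i = j then \<mu> $ i * y $ j else 0)"
        by (rule sum.cong) auto
      then show ?thesis by simp
    qed
    then have "diag_mat \<mu> *v y = (\<chi> i. \<mu> $ i * y $ i)" for y :: "real^'a"
      by (simp add: diag_mat_def matrix_vector_mult_def vec_eq_iff)
    then show ?thesis by (simp add: vec_eq_iff)
  qed
  finally show ?thesis .
qed

lemma key_ineq:
  assumes st: "stochastic P" and sd: "stationary_distribution P \<mu>"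
  shows "(\<Sum>i\<in>UNIV. \<mu> $ i * x $ i * (P *v x) $ i) \<le> (\<Sum>i\<in>UNIV. \<mu> $ i * (x $ i)^2)"
proof -
  have mu0: "\<mu> $ i \<ge> 0" for i using sd unfolding stationary_distribution_def by auto
  have P0: "P $ i $ j \<ge> 0" for i j using st unfolding stochastic_def by auto
  have rows: "(\<Sum>j\<in>UNIV. P $ i $ j) = 1" for i using st unfolding stochastic_def by auto
  have cols: "(\<Sum>i\<in>UNIV. \<mu> $ i * P $ i $ j) = \<mu> $ j" for j
  proof -
    have "\<mu> v* P = \<mu>" using sd unfolding stationary_distribution_def by auto
    then have "(\<mu> v* P) $ j = \<mu> $ j" by simp
    then show ?thesis by (simp add: vector_matrix_mult_def mult.commute)
  qed
  have "(\<Sum>i\<in>UNIV. \<mu> $ i * x $ i * (P *v x) $ i) = (\<Sum>i\<in>UNIV. \<Sum>j\<in>UNIV. (\<mu> $ i * P $ i $ j) * (x $ i * x $ j))"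
    by (simp add: matrix_vector_mult_def sum_distrib_left mult_ac)
  also have "\<dots> \<le> (\<Sum>i\<in>UNIV. \<Sum>j\<in>UNIV. (\<mu> $ i * P $ i $ j) * (((x $ i)^2 + (x $ j)^2) / 2))"
  proof (intro sum_mono mult_left_mono)
    fix i j
    show "x $ i * x $ j \<le> ((x $ i)^2 + (x $ j)^2) / 2"
      using sum_squares_bound[of "x $ i" "x $ j"] by (simp add: power2_eq_square field_simps)
    show "0 \<le> \<mu> $ i * P $ i $ j" using mu0 P0 by simp
  qed
  also have "\<dots> = (\<Sum>i\<in>UNIV. \<Sum>j\<in>UNIV. \<mu> $ i * P $ i $ j * (x $ i)^2 / 2) + (\<Sum>i\<in>UNIV. \<Sum>j\<in>UNIV. \<mu> $ i * P $ i $ j * (x $ j)^2 / 2)"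
    by (simp only: sum.distrib[symmetric] add_divide_distrib distrib_left times_divide_eq_right)
  also have "(\<Sum>i\<in>UNIV. \<Sum>j\<in>UNIV. \<mu> $ i * P $ i $ j * (x $ i)^2 / 2) = (\<Sum>i\<in>UNIV. \<mu> $ i * (x $ i)^2) / 2"
  proof -
    have "(\<Sum>j\<in>UNIV. \<mu> $ i * P $ i $ j * (x $ i)^2 / 2) = \<mu> $ i * (x $ i)^2 / 2" for i
    proof -
      have "(\<Sum>j\<in>UNIV. \<mu> $ i * P $ i $ j * (x $ i)^2 / 2) = (\<Sum>j\<in>UNIV. P $ i $ j * (\<mu> $ i * (x $ i)^2 / 2))"
        by (rule sum.cong) (simp_all add: algebra_simps)
      also have "\<dots> = (\<Sum>j\<in>UNIV. P $ i $ j) * (\<mu> $ i * (x $ i)^2 / 2)"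
        by (rule sum_distrib_right[symmetric])
      finally have "(\<Sum>j\<in>UNIV. \<mu> $ i * P $ i $ j * (x $ i)^2 / 2) = (\<Sum>j\<in>UNIV. P $ i $ j) * (\<mu> $ i * (x $ i)^2 / 2)" .
      then show ?thesis using rows by simp
    qed
    then show ?thesis by (simp only: sum_divide_distrib)
  qed
  also have "(\<Sum>i\<in>UNIV. \<Sum>j\<in>UNIV. \<mu> $ i * P $ i $ j * (x $ j)^2 / 2) = (\<Sum>j\<in>UNIV. \<mu> $ j * (x $ j)^2) / 2"
  proof -
    have "(\<Sum>i\<in>UNIV. \<mu> $ i * P $ i $ j * (x $ j)^2 / 2) = \<mu> $ j * (x $ j)^2 / 2" for j
    proof -
      have "(\<Sum>i\<in>UNIV. \<mu> $ i * P $ i $ j * (x $ j)^2 / 2) = (\<Sum>i\<in>UNIV. \<mu> $ i * P $ i $ j * ((x $ j)^2 / 2))"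
        by (rule sum.cong) (simp_all add: algebra_simps)
      also have "\<dots> = (\<Sum>i\<in>UNIV. \<mu> $ i * P $ i $ j) * ((x $ j)^2 / 2)"
        by (rule sum_distrib_right[symmetric])
      finally have "(\<Sum>i\<in>UNIV. \<mu> $ i * P $ i $ j * (x $ j)^2 / 2) = (\<Sum>i\<in>UNIV. \<mu> $ i * P $ i $ j) * ((x $ j)^2 / 2)" .
      then show ?thesis using cols by simp
    qed
    then show ?thesis by (subst sum.swap) (simp only: sum_divide_distrib)
  qed
  finally show ?thesis by simp
qed

lemma A_pd:
  assumes st: "stochastic P" and irr: "irreducible_chain P" and sd: "stationary_distribution P \<mu>"
    and g0: "0 \<le> \<gamma>" and g1: "\<gamma> < 1" and x: "x \<noteq> 0"
  shows "0 < inner x ((diag_mat \<mu> ** (mat 1 - \<gamma> *\<^sub>R P)) *v x)"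
proof -
  let ?S = "\<Sum>i\<in>UNIV. \<mu> $ i * (x $ i)^2"
  let ?T = "\<Sum>i\<in>UNIV. \<mu> $ i * x $ i * (P *v x) $ i"
  have eq: "inner x ((diag_mat \<mu> ** (mat 1 - \<gamma> *\<^sub>R P)) *v x) = ?S - \<gamma> * ?T"
    unfolding A_apply inner_vec_def
    by (simp add: algebra_simps power2_eq_square sum_subtractf sum_distrib_left)
  obtain i where i: "x $ i \<noteq> 0" using x by (auto simp: vec_eq_iff)
  have "?S \<ge> \<mu> $ i * (x $ i)^2"
    by (rule member_le_sum) (use sd in \<open>auto simp: stationary_distribution_def\<close>)
  moreover have "\<mu> $ i * (x $ i)^2 > 0" using mu_pos[OF st irr sd, of i] i by simp
  ultimately have S: "?S > 0" by linarith
  have "\<gamma> * ?T \<le> \<gamma> * ?S" using key_ineq[OF st sd, of x] g0 by (rule mult_left_mono)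
  then have "?S - \<gamma> * ?T \<ge> (1 - \<gamma>) * ?S" by (simp add: algebra_simps)
  moreover have "(1 - \<gamma>) * ?S > 0" using S g1 by simp
  ultimately show ?thesis using eq by linarith
qed


lemma mat_c_mult: "mat c *v z = c *s (z :: 'a::comm_ring_1^'n)"
proof -
  have "(\<Sum>j\<in>UNIV. (if i = j then c else 0) * z $ j) = c * z $ i" for i
  proof -
    have "(\<Sum>j\<in>UNIV. (if i = j then c else 0) * z $ j) = (\<Sum>j\<in>UNIV. if i = j then c * z $ j else 0)"
      by (rule sum.cong) auto
    then show ?thesis by simp
  qed
  then show ?thesis by (simp add: mat_def matrix_vector_mult_def vec_eq_iff)
qed

lemma eig_transpose:
  fixes A :: "real^'n^'n"
  assumes "is_eigenvalue A c" and "Im c \<noteq> 0"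
  shows "\<exists>u v. transpose A *v u = Re c *\<^sub>R u - Im c *\<^sub>R v \<and> transpose A *v v = Im c *\<^sub>R u + Re c *\<^sub>R v \<and> (u \<noteq> 0 \<or> v \<noteq> 0)"
proof -
  obtain z where z: "z \<noteq> 0" "cmat A *v z = c *s z" using assms(1) unfolding is_eigenvalue_def by blast
  define M where "M = cmat A - mat c"
  have Mz: "M *v z = 0" unfolding M_def by (simp add: matrix_vector_mult_diff_rdistrib mat_c_mult z(2))
  have "\<not> invertible M"
  proof
    assume "invertible M"
    then obtain N where "N ** M = mat 1" unfolding invertible_def by blast
    then have "z = N *v (M *v z)" by (metis matrix_vector_mul_assoc matrix_vector_mul_lid)
    then show False using Mz z(1) by simp
  qed
  then have "det M = 0" using invertible_det_nz by blast
  then have "det (transpose M) = 0" by (simp add: det_transpose)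
  then have "\<not> inj (\<lambda>x. transpose M *v x)"
    using det_nz_iff_inj_gen[OF matrix_vector_mul_linear_gen[of "transpose M"]]
    by (simp del: transpose_matrix_vector)
  then obtain x y where xy: "x \<noteq> y" "transpose M *v x = transpose M *v y" unfolding inj_def by blast
  define w where "w = x - y"
  have w0: "w \<noteq> 0" using xy(1) unfolding w_def by simp
  have "transpose M *v w = 0" unfolding w_def using xy(2) by (simp add: matrix_vector_mult_diff_distrib)
  moreover have "transpose M = cmat (transpose A) - mat c"
    unfolding M_def by (simp add: vec_eq_iff transpose_def cmat_def mat_def)
  ultimately have ew: "cmat (transpose A) *v w = c *s w"
    by (simp add: matrix_vector_mult_diff_rdistrib mat_c_mult)
  define u where "u = (\<chi> k. Re (w $ k))"
  define v where "v = (\<chi> k. Im (w $ k))"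
  have comp: "(\<Sum>j\<in>UNIV. complex_of_real (transpose A $ k $ j) * w $ j) = c * w $ k" for k
    using ew unfolding matrix_vector_mult_def cmat_def by (simp add: vec_eq_iff)
  have "transpose A *v u = Re c *\<^sub>R u - Im c *\<^sub>R v"
  proof -
    have "(transpose A *v u) $ k = (Re c *\<^sub>R u - Im c *\<^sub>R v) $ k" for k
      using arg_cong[OF comp[of k], of Re] unfolding u_def v_def matrix_vector_mult_def
      by (simp add: Re_sum)
    then show ?thesis by (simp add: vec_eq_iff)
  qed
  moreover have "transpose A *v v = Im c *\<^sub>R u + Re c *\<^sub>R v"
  proof -
    have "(transpose A *v v) $ k = (Im c *\<^sub>R u + Re c *\<^sub>R v) $ k" for k
      using arg_cong[OF comp[of k], of Im] unfolding u_def v_def matrix_vector_mult_def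
      by (simp add: Im_sum)
    then show ?thesis by (simp add: vec_eq_iff)
  qed
  moreover have "u \<noteq> 0 \<or> v \<noteq> 0"
  proof (rule ccontr)
    assume "\<not> (u \<noteq> 0 \<or> v \<noteq> 0)"
    then have "w $ k = 0" for k unfolding u_def v_def by (simp add: vec_eq_iff complex_eq_iff)
    then show False using w0 by (simp add: vec_eq_iff)
  qed
  ultimately show ?thesis by blast
qed


theorem proposition1:
  fixes P :: "real^'n^'n" and \<mu> :: "real^'n" and r :: "'n \<Rightarrow> 'n \<Rightarrow> real"
    and \<gamma> :: real and Vstar :: "real^'n"
  assumes "stochastic P" and "irreducible_chain P" and "aperiodic_chain P"
    and "stationary_distribution P \<mu>"
    and "0 \<le> \<gamma>" and "\<gamma> < 1"
    and "Vstar = exp_reward P r + \<gamma> *s (P *v Vstar)"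
    and "\<exists>c. Im c \<noteq> 0 \<and> is_eigenvalue (diag_mat \<mu> ** (mat 1 - \<gamma> *\<^sub>R P)) c"
    and "CARD('d::finite) \<ge> CARD('n)"
  shows "\<exists>(V :: real^'d \<Rightarrow> real^'n) V'.
           (\<forall>\<theta>. (V has_derivative V' \<theta>) (at \<theta>)) \<and>
           (\<forall>\<theta>. rank (matrix (V' \<theta>)) = CARD('n) - 1) \<and>
           (\<forall>\<theta>0. (\<exists>\<theta>. \<theta> 0 = \<theta>0 \<and>
                    (\<forall>t\<ge>0. (\<theta> has_vector_derivative
                        td_field (diag_mat \<mu> ** (mat 1 - \<gamma> *\<^sub>R P)) Vstar V V' (\<theta> t))
                        (at t within {0..}))) \<and>
                  (\<forall>\<theta>. \<theta> 0 = \<theta>0 \<longrightarrow>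
                    (\<forall>t\<ge>0. (\<theta> has_vector_derivative
                        td_field (diag_mat \<mu> ** (mat 1 - \<gamma> *\<^sub>R P)) Vstar V V' (\<theta> t))
                        (at t within {0..})) \<longrightarrow>
                    filterlim (\<lambda>t. norm (V (\<theta> t) - Vstar)) at_top at_top))"
proof -
  define A where "A = diag_mat \<mu> ** (mat 1 - \<gamma> *\<^sub>R P)"
  obtain c where c: "Im c \<noteq> 0" "is_eigenvalue A c" using assms(8) unfolding A_def by blast
  obtain u v where uv: "transpose A *v u = Re c *\<^sub>R u - Im c *\<^sub>R v"
      "transpose A *v v = Im c *\<^sub>R u + Re c *\<^sub>R v" "u \<noteq> 0 \<or> v \<noteq> 0"
    using eig_transpose[OF c(2) c(1)] by blast
  interpret constr A u v "Re c" "Im c"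
  proof
    show "\<And>x. x \<noteq> 0 \<Longrightarrow> 0 < inner x (A *v x)"
      unfolding A_def using A_pd[OF assms(1,2,4,5,6)] by blast
  qed (use uv c in auto)
  obtain \<iota> :: "'n \<Rightarrow> 'd" where inj: "inj \<iota>"
    using card_le_inj[of "UNIV :: 'n set" "UNIV :: 'd set"] assms(9) by auto
  have d: "\<forall>\<theta>. (Vf Vstar \<iota> has_derivative Vd \<iota> \<theta>) (at \<theta>)" using V_deriv by blast
  have r: "\<forall>\<theta>. rank (matrix (Vd \<iota> \<theta>)) = CARD('n) - 1" using rank_Vd[OF inj] by blast
  have e: "\<exists>\<theta>. \<theta> 0 = \<theta>0 \<and> (\<forall>t\<ge>0. (\<theta> has_vector_derivative
             td_field (diag_mat \<mu> ** (mat 1 - \<gamma> *\<^sub>R P)) Vstar (Vf Vstar \<iota>) (Vd \<iota>) (\<theta> t)) (at t within {0..}))" for \<theta>0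
      using exists_sol[OF inj] unfolding A_def by blast
  have dv: "\<forall>\<theta>. \<theta> 0 = \<theta>0 \<longrightarrow> (\<forall>t\<ge>0. (\<theta> has_vector_derivative
             td_field (diag_mat \<mu> ** (mat 1 - \<gamma> *\<^sub>R P)) Vstar (Vf Vstar \<iota>) (Vd \<iota>) (\<theta> t)) (at t within {0..})) \<longrightarrow>
             filterlim (\<lambda>t. norm (Vf Vstar \<iota> (\<theta> t) - Vstar)) at_top at_top" for \<theta>0
      using diverge[OF inj] unfolding A_def by blast
  show ?thesis
    apply (rule exI[of _ "Vf Vstar \<iota>"], rule exI[of _ "Vd \<iota>"])
    using d r e dv by blast
qed

end
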